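(* Let $R$ and $R'$ be (not necessarily commutative) subrings of a $\mathbb Q$-algebra, let $\Gamma$ be an order of a number field, let $d\ge1$ be an integer and $\Gamma'=\mathbb Z[d\Gamma]$. Suppose $dR\subseteq R'$ and $R'\subseteq R$. Then the number of $\Gamma$-structures on $R$ is at most the number of $\Gamma'$-structures on $R'$.
   Context: For rings $A,B$, $\operatorname{Hom}(A,B)$ is the set of ring morphisms $A\to B$, with $B^\times$ acting by conjugation; an $A$-structure on $B$ is an element of $\operatorname{Hom}(A,B)/B^\times$. *)

theory Defs
  imports Complex_Main
begin

definition subring_set :: "'a::ring_1 set \<Rightarrow> bool" where
  "subring_set S \<longleftrightarrow> 1 \<in> S \<and> (\<forall>x\<in>S. \<forall>y\<in>S. x + y \<in> S \<and> x * y \<in> S) \<and> (\<forall>x\<in>S. - x \<in> S)"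

(* A unital ring A is a Q-algebra iff every positive integer is a unit
   (the map Q -> A is then unique and central). *)
definition Q_algebra :: "'a::ring_1 itself \<Rightarrow> bool" where
  "Q_algebra _ \<longleftrightarrow> (\<forall>n::nat. n > 0 \<longrightarrow> (\<exists>y::'a. of_nat n * y = 1 \<and> y * of_nat n = 1))"

definition number_field :: "'k::field_char_0 itself \<Rightarrow> bool" where
  "number_field _ \<longleftrightarrow> (\<exists>B::'k set. finite B \<and>
      (\<forall>x::'k. \<exists>c. x = (\<Sum>b\<in>B. of_rat (c b) * b)))"

definition is_order :: "'k::field_char_0 set \<Rightarrow> bool" where
  "is_order Ord \<longleftrightarrow> subring_set Ord \<and>
     (\<exists>G. finite G \<and> G \<subseteq> Ord \<and> Ord = {(\<Sum>g\<in>G. of_int (c g) * g) | c. True}) \<and>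
     (\<forall>x::'k. \<exists>G c. finite G \<and> G \<subseteq> Ord \<and> x = (\<Sum>g\<in>G. of_rat (c g) * g))"

definition gen_subring :: "'a::ring_1 set \<Rightarrow> 'a set" where
  "gen_subring S = \<Inter>{T. subring_set T \<and> S \<subseteq> T}"

definition ring_homs :: "'k::ring_1 set \<Rightarrow> 'a::ring_1 set \<Rightarrow> ('k \<Rightarrow> 'a) set" where
  "ring_homs G R = {f. (\<forall>x\<in>G. f x \<in> R) \<and> f 1 = 1 \<and>
      (\<forall>x\<in>G. \<forall>y\<in>G. f (x + y) = f x + f y \<and> f (x * y) = f x * f y) \<and>
      (\<forall>x. x \<notin> G \<longrightarrow> f x = undefined)}"

definition conj_rel :: "'k::ring_1 set \<Rightarrow> 'a::ring_1 set \<Rightarrow> (('k \<Rightarrow> 'a) \<times> ('k \<Rightarrow> 'a)) set" where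
  "conj_rel G R = {(f, g). f \<in> ring_homs G R \<and> g \<in> ring_homs G R \<and>
      (\<exists>u\<in>R. \<exists>v\<in>R. u * v = 1 \<and> v * u = 1 \<and> (\<forall>x\<in>G. g x = u * f x * v))}"

definition structures :: "'k::ring_1 set \<Rightarrow> 'a::ring_1 set \<Rightarrow> ('k \<Rightarrow> 'a) set set" where
  "structures G R = ring_homs G R // conj_rel G R"

end

theory Submission
  imports Defs
begin

lemma gen_subring_sub: "subring_set (gen_subring S)"
  unfolding gen_subring_def subring_set_def by auto

lemma gen_subring_le: "subring_set T \<Longrightarrow> S \<subseteq> T \<Longrightarrow> gen_subring S \<subseteq> T"
  unfolding gen_subring_def by auto

lemma gen_subring_ge: "S \<subseteq> gen_subring S"
  unfolding gen_subring_def by auto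

lemma subring_zero: "subring_set S \<Longrightarrow> 0 \<in> S"
  unfolding subring_set_def by (metis add.right_inverse)

lemma hom_zero:
  assumes "subring_set G" "f \<in> ring_homs G R"
  shows "f 0 = 0"
proof -
  have "0 \<in> G" using subring_zero assms(1) .
  then have "f (0 + 0) = f 0 + f 0" using assms(2) unfolding ring_homs_def by blast
  then show ?thesis by simp
qed

lemma hom_neg:
  assumes "subring_set G" "f \<in> ring_homs G R" "x \<in> G"
  shows "f (- x) = - f x"
proof -
  have "-x \<in> G" using assms(1,3) unfolding subring_set_def by blast
  then have "f (x + - x) = f x + f (-x)" using assms(2,3) unfolding ring_homs_def by blast
  then have "f x + f (-x) = 0" using hom_zero[OF assms(1,2)] by simp
  then show ?thesis by (simp add: add_eq_0_iff2)
qed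

lemma hom_nat:
  assumes "subring_set G" "f \<in> ring_homs G R" "x \<in> G"
  shows "of_nat n * x \<in> G \<and> f (of_nat n * x) = of_nat n * f x"
proof (induction n)
  case 0
  then show ?case using subring_zero[OF assms(1)] hom_zero[OF assms(1,2)] by simp
next
  case (Suc n)
  have e: "of_nat (Suc n) * x = x + of_nat n * x" by (simp add: distrib_right)
  have "x + of_nat n * x \<in> G" using Suc assms(1,3) unfolding subring_set_def by blast
  moreover have "f (x + of_nat n * x) = f x + f (of_nat n * x)"
    using Suc assms(2,3) unfolding ring_homs_def by blast
  ultimately show ?case using Suc e by (simp add: distrib_right)
qed

lemma conj_equiv:
  assumes "subring_set R"
  shows "equiv (ring_homs G R) (conj_rel G R)"
proof (rule equivI)
  show "conj_rel G R \<subseteq> ring_homs G R \<times> ring_homs G R"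
    unfolding conj_rel_def by auto
  show "refl_on (ring_homs G R) (conj_rel G R)"
  proof -
    have "1 \<in> R" using assms unfolding subring_set_def by blast
    have "(f, f) \<in> conj_rel G R" if "f \<in> ring_homs G R" for f
    proof -
      have "\<exists>u\<in>R. \<exists>v\<in>R. u * v = 1 \<and> v * u = 1 \<and> (\<forall>x\<in>G. f x = u * f x * v)"
        using \<open>1 \<in> R\<close> by (intro bexI[where x=1]) auto
      then show ?thesis unfolding conj_rel_def using that by blast
    qed
    then show ?thesis unfolding refl_on_def by blast
  qed
  show "sym (conj_rel G R)"
  proof (rule symI)
    fix f g assume "(f, g) \<in> conj_rel G R"
    then obtain u v where uv: "u \<in> R" "v \<in> R" "u * v = 1" "v * u = 1" "\<forall>x\<in>G. g x = u * f x * v"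
      and fg: "f \<in> ring_homs G R" "g \<in> ring_homs G R"
      unfolding conj_rel_def by blast
    have "\<forall>x\<in>G. f x = v * g x * u"
    proof
      fix x assume "x \<in> G"
      then have "v * g x * u = v * (u * f x * v) * u" using uv by simp
      also have "\<dots> = (v * u) * f x * (v * u)" by (simp add: mult.assoc)
      also have "\<dots> = f x" using uv by simp
      finally show "f x = v * g x * u" by simp
    qed
    then show "(g, f) \<in> conj_rel G R" unfolding conj_rel_def using uv fg by blast
  qed
  show "trans (conj_rel G R)"
  proof (rule transI)
    fix f g h assume "(f, g) \<in> conj_rel G R" "(g, h) \<in> conj_rel G R"
    then obtain u v u2 v2 where uv: "u \<in> R" "v \<in> R" "u * v = 1" "v * u = 1" "\<forall>x\<in>G. g x = u * f x * v"
      and uv2: "u2 \<in> R" "v2 \<in> R" "u2 * v2 = 1" "v2 * u2 = 1" "\<forall>x\<in>G. h x = u2 * g x * v2"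
      and fg: "f \<in> ring_homs G R" "h \<in> ring_homs G R"
      unfolding conj_rel_def by blast
    have "u2 * u \<in> R" "v * v2 \<in> R" using uv uv2 assms unfolding subring_set_def by auto
    moreover have "(u2 * u) * (v * v2) = 1"
      by (metis mult.assoc mult_1_left uv(3) uv2(3))
    moreover have "(v * v2) * (u2 * u) = 1"
      by (metis mult.assoc mult_1_left uv(4) uv2(4))
    moreover have "\<forall>x\<in>G. h x = (u2 * u) * f x * (v * v2)"
      using uv(5) uv2(5) by (simp add: mult.assoc)
    ultimately show "(f, h) \<in> conj_rel G R" unfolding conj_rel_def using fg by blast
  qed
qed

theorem lemma10p10:
  fixes R R' :: "'a::ring_1 set" and \<Gamma> :: "'k::field_char_0 set" and d :: nat
  assumes "Q_algebra TYPE('a)"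
    and "subring_set R" and "subring_set R'"
    and "number_field TYPE('k)" and "is_order \<Gamma>"
    and "d \<ge> 1"
    and "(\<lambda>r. of_nat d * r) ` R \<subseteq> R'" and "R' \<subseteq> R"
  shows "\<exists>\<phi>. inj_on \<phi> (structures \<Gamma> R) \<and>
           \<phi> ` structures \<Gamma> R \<subseteq> structures (gen_subring ((\<lambda>g. of_nat d * g) ` \<Gamma>)) R'"
proof -
  define G' where "G' = gen_subring ((\<lambda>g. of_nat d * g) ` \<Gamma>)"
  have sG: "subring_set \<Gamma>" using assms(5) unfolding is_order_def by (rule conjunct1)
  have sG': "subring_set G'" unfolding G'_def by (rule gen_subring_sub)
  have dG: "of_nat d * g \<in> G'" if "g \<in> \<Gamma>" for g
    using gen_subring_ge that unfolding G'_def by blast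
  have dpos: "d > 0" using assms(6) by simp
  have "\<forall>n::nat. n > 0 \<longrightarrow> (\<exists>y::'a. of_nat n * y = 1 \<and> y * of_nat n = 1)"
    using assms(1) unfolding Q_algebra_def .
  then have "\<exists>y::'a. of_nat d * y = 1 \<and> y * of_nat d = 1" using dpos by blast
  then obtain y :: 'a where y: "of_nat d * y = 1" "y * of_nat d = 1" by blast
  have cancel: "a = b" if "of_nat d * a = (of_nat d * b :: 'a)" for a b
  proof -
    have "y * (of_nat d * a) = y * (of_nat d * b)" using that by simp
    then have "(y * of_nat d) * a = (y * of_nat d) * b" by (simp only: mult.assoc)
    then show ?thesis using y(2) by simp
  qed
  define res where "res f = (\<lambda>x. if x \<in> G' then f x else undefined)" for f :: "'k \<Rightarrow> 'a"
  have img: "G' \<subseteq> \<Gamma> \<and> (\<forall>x\<in>G'. f x \<in> R')" if f: "f \<in> ring_homs \<Gamma> R" for f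
  proof -
    let ?T = "{x \<in> \<Gamma>. f x \<in> R'}"
    have "subring_set ?T"
      unfolding subring_set_def
    proof (intro conjI ballI)
      show "1 \<in> ?T" using sG assms(3) f unfolding subring_set_def ring_homs_def by auto
    next
      fix a b assume a: "a \<in> ?T" and b: "b \<in> ?T"
      have "a + b \<in> \<Gamma>" "a * b \<in> \<Gamma>" using a b sG unfolding subring_set_def by auto
      moreover have "f (a+b) = f a + f b" "f (a*b) = f a * f b" using a b f unfolding ring_homs_def by auto
      ultimately show "a + b \<in> ?T" "a * b \<in> ?T" using a b assms(3) unfolding subring_set_def by auto
    next
      fix a assume a: "a \<in> ?T"
      have "-a \<in> \<Gamma>" using a sG unfolding subring_set_def by auto
      then show "-a \<in> ?T" using hom_neg[OF sG f] a assms(3) unfolding subring_set_def by auto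
    qed
    moreover have "(\<lambda>g. of_nat d * g) ` \<Gamma> \<subseteq> ?T"
    proof
      fix x assume "x \<in> (\<lambda>g. of_nat d * g) ` \<Gamma>"
      then obtain g where g: "g \<in> \<Gamma>" "x = of_nat d * g" by blast
      have "f g \<in> R" using f g unfolding ring_homs_def by blast
      then show "x \<in> ?T" using hom_nat[OF sG f g(1), of d] g assms(7) by auto
    qed
    ultimately have "G' \<subseteq> ?T" unfolding G'_def by (rule gen_subring_le)
    then show ?thesis by blast
  qed
  have resH: "res f \<in> ring_homs G' R'" if f: "f \<in> ring_homs \<Gamma> R" for f
  proof -
    have s: "G' \<subseteq> \<Gamma>" "\<forall>x\<in>G'. f x \<in> R'" using img[OF f] by auto
    have "1 \<in> G'" using sG' unfolding subring_set_def by blast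
    moreover have "\<forall>x\<in>G'. \<forall>y\<in>G'. x + y \<in> G' \<and> x * y \<in> G'" using sG' unfolding subring_set_def by blast
    moreover have "\<forall>x\<in>G'. \<forall>y\<in>G'. f (x + y) = f x + f y \<and> f (x * y) = f x * f y"
      using s(1) f unfolding ring_homs_def by blast
    moreover have "f 1 = 1" using f unfolding ring_homs_def by blast
    ultimately show ?thesis using s unfolding ring_homs_def res_def by auto
  qed
  have eqG: "equiv (ring_homs \<Gamma> R) (conj_rel \<Gamma> R)" using conj_equiv[OF assms(2)] .
  have eqG': "equiv (ring_homs G' R') (conj_rel G' R')" using conj_equiv[OF assms(3)] .
  define \<phi> where "\<phi> C = conj_rel G' R' `` {res (SOME f. f \<in> C)}" for C
  have rep: "(SOME f. f \<in> C) \<in> C \<and> (SOME f. f \<in> ring_homs \<Gamma> R) \<in> ring_homs \<Gamma> R \<and>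
      C = conj_rel \<Gamma> R `` {SOME f. f \<in> C} \<and> (SOME f. f \<in> C) \<in> ring_homs \<Gamma> R"
    if C: "C \<in> structures \<Gamma> R" for C
  proof -
    obtain f where f: "f \<in> ring_homs \<Gamma> R" "C = conj_rel \<Gamma> R `` {f}"
      using C unfolding structures_def by (auto elim: quotientE)
    have "f \<in> C" using equiv_class_self[OF eqG f(1)] f(2) by simp
    then have g: "(SOME f. f \<in> C) \<in> C" by (rule someI[where P="\<lambda>f. f \<in> C"])
    have "(SOME f. f \<in> ring_homs \<Gamma> R) \<in> ring_homs \<Gamma> R" using f(1) by (rule someI[where P="\<lambda>f. f \<in> ring_homs \<Gamma> R"])
    moreover have "(f, SOME f. f \<in> C) \<in> conj_rel \<Gamma> R" using g f by simp
    moreover have "C = conj_rel \<Gamma> R `` {SOME f. f \<in> C}" using f equiv_class_eq[OF eqG] calculation(2) by simp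
    moreover have "(SOME f. f \<in> C) \<in> ring_homs \<Gamma> R" using calculation(2) unfolding conj_rel_def by blast
    ultimately show ?thesis using g by blast
  qed
  have "inj_on \<phi> (structures \<Gamma> R)"
  proof (rule inj_onI)
    fix C1 C2 assume C1: "C1 \<in> structures \<Gamma> R" and C2: "C2 \<in> structures \<Gamma> R" and e: "\<phi> C1 = \<phi> C2"
    define g1 where "g1 = (SOME f. f \<in> C1)"
    define g2 where "g2 = (SOME f. f \<in> C2)"
    have r1: "g1 \<in> ring_homs \<Gamma> R" "C1 = conj_rel \<Gamma> R `` {g1}" using rep[OF C1] g1_def by auto
    have r2: "g2 \<in> ring_homs \<Gamma> R" "C2 = conj_rel \<Gamma> R `` {g2}" using rep[OF C2] g2_def by auto
    have "conj_rel G' R' `` {res g1} = conj_rel G' R' `` {res g2}" using e unfolding \<phi>_def g1_def g2_def .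
    moreover have "res g2 \<in> conj_rel G' R' `` {res g2}" using equiv_class_self[OF eqG' resH[OF r2(1)]] .
    ultimately have "(res g1, res g2) \<in> conj_rel G' R'" by (metis Image_singleton_iff)
    then obtain u v where uv: "u \<in> R'" "v \<in> R'" "u * v = 1" "v * u = 1"
        "\<forall>x\<in>G'. res g2 x = u * res g1 x * v"
      unfolding conj_rel_def by blast
    have "\<forall>x\<in>\<Gamma>. g2 x = u * g1 x * v"
    proof
      fix x assume x: "x \<in> \<Gamma>"
      have "of_nat d * x \<in> G'" using dG x .
      then have "g2 (of_nat d * x) = u * g1 (of_nat d * x) * v" using uv(5) unfolding res_def by auto
      then have "of_nat d * g2 x = u * (of_nat d * g1 x) * v"
        using hom_nat[OF sG r1(1) x, of d] hom_nat[OF sG r2(1) x, of d] by simp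
      also have "\<dots> = of_nat d * (u * g1 x * v)"
        by (metis mult.assoc mult_of_nat_commute)
      finally show "g2 x = u * g1 x * v" by (rule cancel)
    qed
    then have "(g1, g2) \<in> conj_rel \<Gamma> R" unfolding conj_rel_def using r1 r2 uv assms(8) by blast
    then show "C1 = C2" using r1 r2 equiv_class_eq[OF eqG] by simp
  qed
  moreover have "\<phi> ` structures \<Gamma> R \<subseteq> structures G' R'"
  proof
    fix D assume "D \<in> \<phi> ` structures \<Gamma> R"
    then obtain C where C: "C \<in> structures \<Gamma> R" "D = \<phi> C" by blast
    have "res (SOME f. f \<in> C) \<in> ring_homs G' R'" using rep[OF C(1)] resH by blast
    then show "D \<in> structures G' R'" unfolding structures_def C(2) \<phi>_def by (rule quotientI)
  qed
  ultimately show ?thesis unfolding G'_def by blast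
qed

end
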